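(* Let $R$ be a ring of characteristic $0$ and let $p,q$ be integers with $1\le p\le 3$ and $1\le q\le 5$. Suppose $R$ has the $2$-nil-sum property of type $(p,q)$, i.e. every non central-unit $a\in R$ can be written as $a=b+c$ with $b,c\in R$, $b^p=0$ and $c^q=0$. Then $R$ is commutative.
   Context: All rings are associative with identity. A central unit of $R$ is a unit of $R$ lying in the center of $R$; a non central-unit is an element that is not a central unit. *)

theory Defs
  imports Main
begin

definition ring_unit :: "'a::ring_1 \<Rightarrow> bool" where
  "ring_unit x \<longleftrightarrow> (\<exists>y. x * y = 1 \<and> y * x = 1)"

definition central :: "'a::ring_1 \<Rightarrow> bool" where
  "central x \<longleftrightarrow> (\<forall>y. x * y = y * x)"

definition central_unit :: "'a::ring_1 \<Rightarrow> bool" where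
  "central_unit x \<longleftrightarrow> ring_unit x \<and> central x"

definition two_nil_sum :: "nat \<Rightarrow> nat \<Rightarrow> 'a::ring_1 itself \<Rightarrow> bool" where
  "two_nil_sum p q (T :: 'a itself) \<longleftrightarrow>
     (\<forall>a::'a. \<not> central_unit a \<longrightarrow> (\<exists>b c. a = b + c \<and> b ^ p = 0 \<and> c ^ q = 0))"

end

theory Submission
  imports Defs "Jordan_Normal_Form.Schur_Decomposition"
begin


definition mtrace :: "'a::comm_ring_1 mat \<Rightarrow> 'a" where
  "mtrace A = (\<Sum>i<dim_row A. A $$ (i,i))"

lemma mtrace_comm: assumes "A \<in> carrier_mat n n" "B \<in> carrier_mat n n"
  shows "mtrace (A * B) = mtrace (B * A)"
proof -
  have "mtrace (A * B) = (\<Sum>i<n. \<Sum>k<n. A $$ (i,k) * B $$ (k,i))"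
    using assms by (simp add: mtrace_def scalar_prod_def atLeast0LessThan)
  also have "\<dots> = (\<Sum>k<n. \<Sum>i<n. B $$ (k,i) * A $$ (i,k))"
    by (subst sum.swap) (simp add: mult.commute)
  also have "\<dots> = mtrace (B * A)"
    using assms by (simp add: mtrace_def scalar_prod_def atLeast0LessThan)
  finally show ?thesis .
qed

lemma mtrace_nilp_complex: fixes A :: "complex mat"
  assumes A: "A \<in> carrier_mat n n" and nil: "A ^\<^sub>m k = 0\<^sub>m n n"
  shows "mtrace A = 0"
proof (cases "k = 0")
  case True
  then have "1\<^sub>m n = (0\<^sub>m n n :: complex mat)" using nil A by simp
  then have "n = 0" by (metis index_one_mat(1) index_zero_mat(1) zero_neq_one neq0_conv)
  then show ?thesis using A by (simp add: mtrace_def)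
next
  case False
  obtain es where es: "char_poly A = (\<Prod> a \<leftarrow> es. [:- a, 1:])" "length es = n"
    using char_poly_factorized[OF A] by blast
  obtain B P Q where sd: "schur_decomposition A es = (B,P,Q)" by (cases "schur_decomposition A es") auto
  from schur_decomposition[OF A es(1) sd]
  have sim: "similar_mat_wit A B P Q" and dB: "diag_mat B = es" by auto
  from sim A have B: "B \<in> carrier_mat n n" and P: "P \<in> carrier_mat n n" and Q: "Q \<in> carrier_mat n n"
    and QP: "Q * P = 1\<^sub>m n" and AB: "A = P * B * Q"
    by (auto simp: similar_mat_wit_def Let_def)
  have es0: "e = 0" if e: "e \<in> set es" for e
  proof -
    have "poly (char_poly A) e = 0" unfolding es(1) using e
      by (induct es) (auto simp: poly_prod_list)
    then have "eigenvalue A e" using eigenvalue_root_char_poly[OF A] by simp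
    then obtain v where ev: "eigenvector A v e" unfolding eigenvalue_def by auto
    have v: "v \<in> carrier_vec n" "v \<noteq> 0\<^sub>v n" using ev A unfolding eigenvector_def by auto
    have "A ^\<^sub>m k *\<^sub>v v = e ^ k \<cdot>\<^sub>v v" by (rule eigenvector_pow[OF A ev])
    moreover have "(0\<^sub>m n n :: complex mat) *\<^sub>v v = 0\<^sub>v n" using v by (intro eq_vecI) auto
    ultimately have "e ^ k \<cdot>\<^sub>v v = 0\<^sub>v n" using nil by simp
    moreover obtain i where i: "i < n" "v $ i \<noteq> 0"
      using v by (metis eq_vecI carrier_vecD index_zero_vec(1) index_zero_vec(2))
    ultimately have "e ^ k * v $ i = 0"
      by (metis index_smult_vec(1) index_zero_vec(1) carrier_vecD v(1))
    then have "e ^ k = 0" using i by simp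
    then show "e = 0" by simp
  qed
  have "mtrace A = mtrace (P * B * Q)" using AB by simp
  also have "\<dots> = mtrace (Q * (P * B))"
    using P B Q by (subst mtrace_comm[of _ n]) (auto simp: assoc_mult_mat[of P n n B n Q n])
  also have "Q * (P * B) = B" using P B Q QP
    by (metis assoc_mult_mat left_mult_one_mat)
  also have "mtrace B = sum_list (diag_mat B)"
    using B by (simp add: mtrace_def diag_mat_def sum_list_sum_nth atLeast0LessThan)
  also have "\<dots> = 0" unfolding dB using es0 by (induct es) auto
  finally show ?thesis .
qed

lemma mtrace_nilp_rat: fixes A :: "rat mat"
  assumes A: "A \<in> carrier_mat n n" and nil: "A ^\<^sub>m k = 0\<^sub>m n n"
  shows "mtrace A = 0"
proof -
  let ?C = "map_mat (of_rat :: rat \<Rightarrow> complex) A"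
  have C: "?C \<in> carrier_mat n n" using A by simp
  have "?C ^\<^sub>m k = map_mat of_rat (A ^\<^sub>m k)"
    by (rule of_rat_hom.mat_hom_pow[OF A, symmetric])
  also have "\<dots> = 0\<^sub>m n n" using nil by auto
  finally have "mtrace ?C = 0" by (rule mtrace_nilp_complex[OF C])
  moreover have "mtrace ?C = of_rat (mtrace A)" using A by (simp add: mtrace_def of_rat_sum)
  ultimately show ?thesis by simp
qed


definition qinv :: "int \<Rightarrow> 'a::ring_1" where
  "qinv n = (SOME y. of_int n * y = 1 \<and> y * of_int n = 1)"

definition QA :: "'a::ring_1 itself \<Rightarrow> bool" where
  "QA T \<longleftrightarrow> (\<forall>n::int. n \<noteq> 0 \<longrightarrow> ring_unit (of_int n :: 'a))"

lemma qinv: assumes "QA TYPE('a::ring_1)" "n \<noteq> 0"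
  shows "of_int n * (qinv n :: 'a) = 1" "(qinv n :: 'a) * of_int n = 1"
proof -
  have "\<exists>y::'a. of_int n * y = 1 \<and> y * of_int n = 1"
    using assms unfolding QA_def ring_unit_def by auto
  then have "of_int n * (qinv n :: 'a) = 1 \<and> (qinv n :: 'a) * of_int n = 1"
    unfolding qinv_def by (rule someI_ex)
  then show "of_int n * (qinv n :: 'a) = 1" "(qinv n :: 'a) * of_int n = 1" by auto
qed

lemma qinv_central: assumes "QA TYPE('a::ring_1)" "n \<noteq> 0"
  shows "(qinv n :: 'a) * x = x * qinv n"
proof -
  note q = qinv[OF assms]
  let ?y = "qinv n :: 'a"
  have "?y * x = ?y * x * (of_int n * ?y)" using q by simp
  also have "\<dots> = ?y * (x * of_int n) * ?y" by (simp add: mult.assoc)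
  also have "\<dots> = ?y * (of_int n * x) * ?y" by (simp add: mult_of_int_commute)
  also have "\<dots> = (?y * of_int n) * x * ?y" by (simp add: mult.assoc)
  also have "\<dots> = x * ?y" using q by simp
  finally show ?thesis .
qed

lemma qinv_unique: assumes "QA TYPE('a::ring_1)" "n \<noteq> 0" "of_int n * (y::'a) = 1"
  shows "qinv n = y"
proof -
  have "qinv n = qinv n * (of_int n * y)" using assms by simp
  also have "\<dots> = y" using qinv[OF assms(1,2)] by (simp add: mult.assoc[symmetric])
  finally show ?thesis .
qed

lemma qcancel: assumes "QA TYPE('a::ring_1)" "d \<noteq> 0"
  shows "x * of_int d * y * (qinv d :: 'a) = x * y"
proof -
  have "x * of_int d * y * (qinv d :: 'a) = x * of_int d * (y * qinv d)" by (simp only: mult.assoc)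
  also have "y * qinv d = qinv d * y" by (rule qinv_central[OF assms, symmetric])
  also have "x * of_int d * (qinv d * y) = x * (of_int d * qinv d) * y" by (simp only: mult.assoc)
  also have "\<dots> = x * y" using qinv[OF assms] by simp
  finally show ?thesis .
qed

lemma qinv_mult: assumes "QA TYPE('a::ring_1)" "n \<noteq> 0" "m \<noteq> 0"
  shows "(qinv (n*m) :: 'a) = qinv n * qinv m"
proof (rule qinv_unique)
  show "QA TYPE('a)" "n * m \<noteq> 0" using assms by auto
  have "of_int (n*m) * (qinv n * qinv m :: 'a) = of_int n * of_int m * qinv n * qinv m"
    by (simp only: of_int_mult mult.assoc)
  also have "\<dots> = of_int n * qinv n" by (rule qcancel[OF assms(1,3)])
  also have "\<dots> = 1" using qinv[OF assms(1,2)] by simp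
  finally show "of_int (n*m) * (qinv n * qinv m :: 'a) = 1" .
qed

lemma qinv_eq: assumes "QA TYPE('a::ring_1)" "r \<noteq> 0" "d \<noteq> 0" "a * r = p * d"
  shows "of_int p * (qinv r :: 'a) = of_int a * qinv d"
proof -
  note qr = qinv[OF assms(1,2)] and qd = qinv[OF assms(1,3)]
  have "of_int p * (qinv r :: 'a) = of_int p * qinv r * (of_int d * qinv d)" using qd by simp
  also have "\<dots> = of_int p * (qinv r * of_int d) * qinv d" by (simp only: mult.assoc)
  also have "qinv r * of_int d = of_int d * (qinv r :: 'a)" by (rule qinv_central[OF assms(1,2)])
  also have "of_int p * (of_int d * qinv r) * qinv d = of_int (p * d) * qinv r * (qinv d :: 'a)"
    by (simp only: mult.assoc of_int_mult)
  also have "\<dots> = of_int (a * r) * qinv r * qinv d" using assms(4) by simp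
  also have "\<dots> = of_int a * (of_int r * qinv r) * qinv d" by (simp add: mult.assoc)
  also have "\<dots> = of_int a * qinv d" using qr by simp
  finally show ?thesis .
qed

definition iota :: "rat \<Rightarrow> 'a::ring_1" where
  "iota q = of_int (fst (quotient_of q)) * qinv (snd (quotient_of q))"

lemma iota_frac: assumes "QA TYPE('a::ring_1)" "d \<noteq> 0"
  shows "(iota (of_int a / of_int d) :: 'a) = of_int a * qinv d"
proof -
  obtain p r where pr: "quotient_of (of_int a / of_int d) = (p, r)" by (cases "quotient_of (of_int a / of_int d)")
  have r: "r > 0" using quotient_of_denom_pos[OF pr] .
  have "of_int a / of_int d = (of_int p / of_int r :: rat)" using quotient_of_div[OF pr] .
  then have ar: "a * r = p * d" using r assms(2) by (simp add: frac_eq_eq) (metis of_int_eq_iff of_int_mult)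
  have rne: "r \<noteq> 0" using r by simp
  have "of_int p * (qinv r :: 'a) = of_int a * qinv d"
    by (rule qinv_eq[OF assms(1) rne assms(2) ar])
  then show ?thesis unfolding iota_def pr fst_conv snd_conv .
qed

lemma iota_rep: "\<exists>a d. d \<noteq> 0 \<and> (q::rat) = of_int a / of_int d"
proof -
  obtain a d where ad: "quotient_of q = (a, d)" by (cases "quotient_of q")
  have "d > 0" by (rule quotient_of_denom_pos[OF ad])
  moreover have "q = of_int a / of_int d" by (rule quotient_of_div[OF ad])
  ultimately show ?thesis by (intro exI[of _ a] exI[of _ d]) simp
qed

lemma iota_add: assumes "QA TYPE('a::ring_1)"
  shows "(iota (x + y) :: 'a) = iota x + iota y"
proof -
  obtain a b where ab: "b \<noteq> 0" "x = of_int a / of_int b" using iota_rep by blast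
  obtain c d where cd: "d \<noteq> 0" "y = of_int c / of_int d" using iota_rep by blast
  have e: "x + y = of_int (a*d + c*b) / of_int (b*d)" using ab cd by (simp add: field_simps)
  have bd: "b * d \<noteq> 0" using ab cd by simp
  have "(iota (x + y) :: 'a) = of_int (a*d + c*b) * qinv (b*d)"
    unfolding e by (rule iota_frac[OF assms bd])
  also have "\<dots> = of_int a * of_int d * qinv b * qinv d + of_int c * of_int b * qinv b * qinv d"
    by (simp only: qinv_mult[OF assms ab(1) cd(1)] of_int_add of_int_mult distrib_right mult.assoc)
  also have "of_int a * of_int d * qinv b * (qinv d :: 'a) = of_int a * qinv b"
    by (rule qcancel[OF assms cd(1)])
  also have "of_int c * of_int b * qinv b * (qinv d :: 'a) = of_int c * qinv d"
    using qinv[OF assms ab(1)] by (simp add: mult.assoc)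
  also have "of_int a * qinv b + of_int c * (qinv d :: 'a) = iota x + iota y"
    using ab cd iota_frac[OF assms] by simp
  finally show ?thesis .
qed

lemma iota_mult: assumes "QA TYPE('a::ring_1)"
  shows "(iota (x * y) :: 'a) = iota x * iota y"
proof -
  obtain a b where ab: "b \<noteq> 0" "x = of_int a / of_int b" using iota_rep by blast
  obtain c d where cd: "d \<noteq> 0" "y = of_int c / of_int d" using iota_rep by blast
  have e: "x * y = of_int (a*c) / of_int (b*d)" using ab cd by simp
  have bd: "b * d \<noteq> 0" using ab cd by simp
  have "(iota (x * y) :: 'a) = of_int (a*c) * qinv (b*d)"
    unfolding e by (rule iota_frac[OF assms bd])
  also have "\<dots> = of_int a * (of_int c * qinv b) * qinv d"
    by (simp only: qinv_mult[OF assms ab(1) cd(1)] of_int_mult mult.assoc)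
  also have "of_int c * qinv b = (qinv b :: 'a) * of_int c"
    by (rule qinv_central[OF assms ab(1), symmetric])
  also have "of_int a * (qinv b * of_int c) * (qinv d :: 'a) = (of_int a * qinv b) * (of_int c * qinv d)"
    by (simp only: mult.assoc)
  also have "\<dots> = iota x * iota y"
    using ab cd iota_frac[OF assms] by simp
  finally show ?thesis .
qed

lemma iota_one: assumes "QA TYPE('a::ring_1)" shows "(iota 1 :: 'a) = 1"
  using iota_frac[OF assms, of 1 1] qinv[OF assms, of 1] by simp

lemma iota_central: assumes "QA TYPE('a::ring_1)" shows "(iota q :: 'a) * x = x * iota q"
proof -
  obtain a b where ab: "b \<noteq> 0" "q = of_int a / of_int b" using iota_rep by blast
  have "(iota q :: 'a) * x = of_int a * (qinv b * x)" using ab iota_frac[OF assms] by (simp add: mult.assoc)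
  also have "qinv b * x = x * (qinv b :: 'a)" by (rule qinv_central[OF assms ab(1)])
  also have "of_int a * (x * qinv b) = (of_int a * x) * (qinv b :: 'a)" by (simp only: mult.assoc)
  also have "of_int a * x = x * (of_int a :: 'a)" by (rule mult_of_int_commute)
  also have "x * of_int a * qinv b = x * (iota q :: 'a)" using ab iota_frac[OF assms] by (simp add: mult.assoc)
  finally show ?thesis .
qed

lemma iota_vs: assumes "QA TYPE('a::ring_1)"
  shows "vector_space (\<lambda>q (x::'a). iota q * x)"
proof (unfold_locales)
  show "iota a * (x + y) = iota a * x + iota a * y" for a and x y :: 'a by (rule distrib_left)
  show "iota (a + b) * x = iota a * x + iota b * (x::'a)" for a b x
    by (simp only: iota_add[OF assms] distrib_right)
  show "iota a * (iota b * x) = iota (a * b) * (x::'a)" for a b x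
    by (simp only: iota_mult[OF assms] mult.assoc)
  show "iota 1 * x = (x::'a)" for x by (simp only: iota_one[OF assms] mult_1_left)
qed


lemma mtrace_add: assumes "A \<in> carrier_mat n n" "B \<in> carrier_mat n n"
  shows "mtrace (A + B) = mtrace A + mtrace B"
  using assms by (simp add: mtrace_def sum.distrib)

lemma mtrace_one: "mtrace (1\<^sub>m n :: 'a::comm_ring_1 mat) = of_nat n"
  by (simp add: mtrace_def)

lemma fd_contra:
  fixes W :: "'a::ring_1 set" and x1 x2 x3 :: 'a
  assumes QA: "QA TYPE('a)" and one: "(1::'a) \<noteq> 0"
    and fin: "finite W"
    and one_in: "1 \<in> module.span (\<lambda>q x. iota q * x) W"
    and st: "\<And>v y. y \<in> {x1,x2,x3} \<Longrightarrow> v \<in> module.span (\<lambda>q x. iota q * x) W \<Longrightarrow>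
                   y * v \<in> module.span (\<lambda>q x. iota q * x) W"
    and n1: "x1 ^ k1 = 0" and n2: "x2 ^ k2 = 0" and n3: "x3 ^ k3 = 0"
    and sum: "x1 + x2 + x3 = 1"
  shows False
proof -
  interpret V: vector_space "\<lambda>q (x::'a). iota q * x" by (rule iota_vs[OF QA])
  define S where "S = V.span W"
  obtain B where B: "B \<subseteq> S" "V.independent B" "S \<subseteq> V.span B"
    using V.maximal_independent_subset[of S] by blast
  have finB: "finite B" using V.independent_span_bound[OF fin B(2)] B(1) S_def by auto
  have spanB: "V.span B = S"
  proof
    show "V.span B \<subseteq> S" using V.span_mono[OF B(1)] V.span_span S_def by auto
    show "S \<subseteq> V.span B" by (rule B(3))
  qed
  obtain us where us: "set us = B" "distinct us" using finite_distinct_list[OF finB] by auto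
  define d where "d = length us"
  have usB: "us ! k \<in> B" if "k < d" for k using that us(1) d_def by auto
  have usS: "us ! k \<in> S" if "k < d" for k using usB[OF that] spanB V.span_base by blast
  define R where "R v i = V.representation B v (us ! i)" for v i
  have expand: "v = (\<Sum>k<d. iota (R v k) * us ! k)" if v: "v \<in> S" for v
  proof -
    have "v = (\<Sum>b\<in>B. iota (V.representation B v b) * b)"
      using V.sum_representation_eq[OF B(2) _ finB order_refl, of v] v spanB by simp
    also have "\<dots> = (\<Sum>b\<leftarrow>us. iota (V.representation B v b) * b)"
      using sum.distinct_set_conv_list[OF us(2)] us(1) by metis
    also have "\<dots> = (\<Sum>k<d. iota (R v k) * us ! k)"
      by (simp add: sum_list_sum_nth R_def d_def atLeast0LessThan)
    finally show ?thesis .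
  qed
  have Rsum: "R (\<Sum>k<d. iota (c k) * w k) i = (\<Sum>k<d. c k * R (w k) i)"
    if w: "\<And>k. k < d \<Longrightarrow> w k \<in> S" for c w i
  proof -
    have "R (\<Sum>k<d. iota (c k) * w k) i = (\<Sum>k<d. V.representation B (iota (c k) * w k) (us ! i))"
      unfolding R_def using w spanB
      by (subst V.representation_sum[OF B(2)]) (auto intro: V.span_scale)
    also have "\<dots> = (\<Sum>k<d. c k * R (w k) i)"
      unfolding R_def using w spanB
      by (intro sum.cong refl) (simp add: V.representation_scale[OF B(2)])
    finally show ?thesis .
  qed
  define stab where "stab y \<longleftrightarrow> (\<forall>v\<in>S. y * v \<in> S)" for y
  define M where "M y = mat d d (\<lambda>(i,j). R (y * us ! j) i)" for y
  have Mc: "M y \<in> carrier_mat d d" for y by (simp add: M_def)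
  have Mmult: "M (y * z) = M y * M z" if y: "stab y" and z: "stab z" for y z
  proof (rule eq_matI)
    fix i j assume i: "i < dim_row (M y * M z)" and j: "j < dim_col (M y * M z)"
    then have i: "i < d" and j: "j < d" by (auto simp: M_def)
    have zu: "z * us ! j \<in> S" using z usS[OF j] unfolding stab_def by auto
    have "y * z * us ! j = y * (\<Sum>k<d. iota (R (z * us ! j) k) * us ! k)"
      using expand[OF zu] by (simp add: mult.assoc)
    also have "\<dots> = (\<Sum>k<d. iota (R (z * us ! j) k) * (y * us ! k))"
      unfolding sum_distrib_left
    proof (rule sum.cong[OF refl])
      fix k
      have "y * (iota (R (z * us ! j) k) * us ! k) = (y * iota (R (z * us ! j) k)) * us ! k"
        by (simp only: mult.assoc)
      also have "y * iota (R (z * us ! j) k) = iota (R (z * us ! j) k) * y"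
        by (rule iota_central[OF QA, symmetric])
      finally show "y * (iota (R (z * us ! j) k) * us ! k) = iota (R (z * us ! j) k) * (y * us ! k)"
        by (simp only: mult.assoc)
    qed
    finally have e: "y * z * us ! j = (\<Sum>k<d. iota (R (z * us ! j) k) * (y * us ! k))" .
    have "M (y * z) $$ (i,j) = R (y * z * us ! j) i" using i j by (simp add: M_def)
    also have "\<dots> = (\<Sum>k<d. R (z * us ! j) k * R (y * us ! k) i)"
      unfolding e by (rule Rsum) (use y usS in \<open>auto simp: stab_def\<close>)
    also have "\<dots> = (M y * M z) $$ (i,j)"
      using i j by (simp add: M_def scalar_prod_def atLeast0LessThan mult.commute)
    finally show "M (y * z) $$ (i,j) = (M y * M z) $$ (i,j)" .
  qed (auto simp: M_def)
  have Madd: "M (y + z) = M y + M z" if y: "stab y" and z: "stab z" for y z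
  proof (rule eq_matI)
    fix i j assume "i < dim_row (M y + M z)" "j < dim_col (M y + M z)"
    then have i: "i < d" and j: "j < d" by (auto simp: M_def)
    have "y * us ! j \<in> V.span B" "z * us ! j \<in> V.span B"
      using y z usS[OF j] spanB unfolding stab_def by auto
    then show "M (y + z) $$ (i,j) = (M y + M z) $$ (i,j)"
      using i j by (simp add: M_def R_def distrib_right V.representation_add[OF B(2)])
  qed (auto simp: M_def)
  have M1: "M 1 = 1\<^sub>m d"
  proof (rule eq_matI)
    fix i j assume "i < dim_row (1\<^sub>m d)" "j < dim_col (1\<^sub>m d)"
    then have i: "i < d" and j: "j < d" by auto
    have "M 1 $$ (i,j) = (if us ! i = us ! j then 1 else 0)"
      using i j by (simp add: M_def R_def V.representation_basis[OF B(2) usB[OF j]])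
    also have "\<dots> = 1\<^sub>m d $$ (i,j)" using i j us(2) d_def by (simp add: nth_eq_iff_index_eq)
    finally show "M 1 $$ (i,j) = 1\<^sub>m d $$ (i,j)" .
  qed (auto simp: M_def)
  have M0: "M 0 = 0\<^sub>m d d"
    by (rule eq_matI) (auto simp: M_def R_def V.representation_zero)
  have stab_mult: "stab (y * z)" if "stab y" "stab z" for y z
    using that by (auto simp: stab_def mult.assoc)
  have stab1: "stab 1" by (simp add: stab_def)
  have stab_pow: "stab (y ^ k)" if "stab y" for y k
  proof (induct k)
    case (Suc k) then show ?case using stab_mult[OF that Suc] by simp
  qed (simp add: stab1)
  have Mpow: "M (y ^ k) = M y ^\<^sub>m k" if y: "stab y" for y k
  proof (induct k)
    case 0 then show ?case using Mc[of y] by (simp add: M1)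
  next
    case (Suc k)
    have "M (y ^ Suc k) = M (y ^ k * y)" by (simp only: power_Suc2)
    also have "\<dots> = M (y ^ k) * M y" by (rule Mmult[OF stab_pow[OF y] y])
    finally show ?case using Suc by simp
  qed
  have stx: "stab y" if "y \<in> {x1,x2,x3}" for y using st[OF that] unfolding stab_def S_def by auto
  have tr0: "mtrace (M y) = 0" if "y \<in> {x1,x2,x3}" "y ^ k = 0" for y k
  proof -
    have "M y ^\<^sub>m k = M (y ^ k)" using Mpow[OF stx[OF that(1)]] by simp
    also have "\<dots> = 0\<^sub>m d d" using that(2) M0 by simp
    finally have "M y ^\<^sub>m k = 0\<^sub>m d d" .
    then show ?thesis by (rule mtrace_nilp_rat[OF Mc])
  qed
  have s1: "stab x1" and s2: "stab x2" and s3: "stab x3" using stx by auto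
  have s12: "stab (x1 + x2)" using s1 s2 spanB unfolding stab_def
    by (auto simp: distrib_right intro: V.span_add)
  have "M 1 = M (x1 + x2 + x3)" using sum by simp
  also have "\<dots> = M (x1 + x2) + M x3" by (rule Madd[OF s12 s3])
  also have "M (x1 + x2) = M x1 + M x2" by (rule Madd[OF s1 s2])
  finally have "M 1 = M x1 + M x2 + M x3" .
  then have "mtrace (1\<^sub>m d :: rat mat) = mtrace (M x1 + M x2 + M x3)" using M1 by simp
  also have "\<dots> = mtrace (M x1 + M x2) + mtrace (M x3)"
    by (rule mtrace_add[OF add_carrier_mat[OF Mc] Mc])
  also have "\<dots> = mtrace (M x1) + mtrace (M x2) + mtrace (M x3)"
    by (simp add: mtrace_add[OF Mc Mc])
  also have "\<dots> = 0" using tr0[of x1 k1] tr0[of x2 k2] tr0[of x3 k3] n1 n2 n3 by simp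
  finally have d0: "d = 0" by (simp add: mtrace_one)
  then have "B = {}" using us(1) d_def by simp
  then have "S = {0}" using spanB by simp
  then show False using one one_in S_def by auto
qed


fun evw :: "'a::ring_1 \<Rightarrow> 'a \<Rightarrow> bool list \<Rightarrow> 'a" where
  "evw b c [] = 1"
| "evw b c (x # w) = (if x then c else b) * evw b c w"

lemma evw_append: "evw b c (u @ v) = evw b c u * evw b c v"
  by (induct u) (auto simp: mult.assoc)

definition evl :: "'a::ring_1 \<Rightarrow> 'a \<Rightarrow> (int \<times> bool list) list \<Rightarrow> 'a" where
  "evl b c xs = (\<Sum>(k,w)\<leftarrow>xs. of_int k * evw b c w)"

lemma evl_simps[simp]: "evl b c [] = 0" "evl b c ((k,w) # xs) = of_int k * evw b c w + evl b c xs"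
  by (simp_all add: evl_def)

fun isprefix :: "bool list \<Rightarrow> bool list \<Rightarrow> bool" where
  "isprefix [] ys = True"
| "isprefix (x # xs) [] = False"
| "isprefix (x # xs) (y # ys) = (x = y \<and> isprefix xs ys)"

lemma isprefix_iff: "isprefix xs ys \<longleftrightarrow> (\<exists>q. ys = xs @ q)"
  by (induct xs ys rule: isprefix.induct) auto

fun contains :: "bool list \<Rightarrow> bool list \<Rightarrow> bool" where
  "contains L [] = (L = [])"
| "contains L (y # ys) = (isprefix L (y # ys) \<or> contains L ys)"

lemma contains_iff: "contains L w \<longleftrightarrow> (\<exists>p q. w = p @ L @ q)"
proof (induct w)
  case Nil then show ?case by auto
next
  case (Cons y ys)
  show ?case
  proof
    assume "contains L (y # ys)"
    then show "\<exists>p q. y # ys = p @ L @ q"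
    proof (cases "isprefix L (y # ys)")
      case True then obtain q where "y # ys = L @ q" by (auto simp: isprefix_iff)
      then show ?thesis by (intro exI[of _ "[]"] exI[of _ q]) simp
    next
      case False
      with \<open>contains L (y # ys)\<close> have "contains L ys" by simp
      then obtain p q where "ys = p @ L @ q" using Cons.hyps by blast
      then show ?thesis by (intro exI[of _ "y # p"] exI[of _ q]) simp
    qed
  next
    assume "\<exists>p q. y # ys = p @ L @ q"
    then obtain p q where pq: "y # ys = p @ L @ q" by blast
    show "contains L (y # ys)"
    proof (cases p)
      case Nil
      then have "isprefix L (y # ys)" using pq unfolding isprefix_iff by auto
      then show ?thesis by simp
    next
      case (Cons z p') then show ?thesis using pq Cons.hyps by auto
    qed
  qed
qed

fun num :: "bool list \<Rightarrow> nat" where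
  "num [] = 0"
| "num (x # w) = (if x then 2 ^ length w else 0) + num w"

lemma num_append: "num (u @ v) = num u * 2 ^ length v + num v"
  by (induct u) (auto simp: power_add algebra_simps)

lemma num_less: assumes "length u = length L" "num u < num L"
  shows "num (p @ u @ q) < num (p @ L @ q)"
proof -
  have "num u * 2 ^ length q + num q < num L * 2 ^ length q + num q"
    using assms(2) by simp
  then show ?thesis using assms(1) by (simp add: num_append)
qed

inductive_set zspan :: "'a::ring_1 set \<Rightarrow> 'a set" for S where
  zs_zero: "0 \<in> zspan S"
| zs_base: "x \<in> S \<Longrightarrow> x \<in> zspan S"
| zs_add: "x \<in> zspan S \<Longrightarrow> y \<in> zspan S \<Longrightarrow> x + y \<in> zspan S"
| zs_neg: "x \<in> zspan S \<Longrightarrow> - x \<in> zspan S"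

lemma zs_diff: "x \<in> zspan S \<Longrightarrow> y \<in> zspan S \<Longrightarrow> x - y \<in> zspan S"
  by (simp only: diff_conv_add_uminus) (intro zs_add zs_neg)

lemma zs_subset: assumes "S \<subseteq> zspan T" shows "zspan S \<subseteq> zspan T"
proof
  fix x assume "x \<in> zspan S" then show "x \<in> zspan T"
    by induct (use assms in \<open>auto intro: zspan.intros\<close>)
qed

lemma zs_map: assumes "\<And>x. x \<in> S \<Longrightarrow> f x \<in> zspan T" "f 0 = 0"
    "\<And>x y. f (x + y) = f x + f y" "\<And>x. f (- x) = - f x"
  shows "x \<in> zspan S \<Longrightarrow> f x \<in> zspan T"
  by (induct rule: zspan.induct) (auto simp: assms intro: zspan.intros)

lemma zs_of_int: assumes "x \<in> zspan S" shows "of_int k * x \<in> zspan S"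
proof (induct k rule: int_induct[of _ 0])
  case base then show ?case by (simp add: zs_zero)
next
  case (step1 i) then show ?case using zs_add[OF _ assms] by (simp add: distrib_right)
next
  case (step2 i)
  have "of_int (i - 1) * x = of_int i * x - x" by (simp add: algebra_simps)
  then show ?case using zs_diff[OF step2(2) assms] by simp
qed

definition "L0 = [False,False,False]"
definition "R0 = []"
definition "L1 = [True,True,True,True,True]"
definition "R1 = []"
definition "L2 = [True,True]"
definition "R2 = [(1,[False,False]), (1,[False,True]), (1,[True,False])]"
definition "L3 = [True,False,True,False,True]"
definition "R3 = [(-1,[True,False,False,True,False]), (-1,[False,True,False,True,False]), (-1,[False,True,False,False,True])]"
definition "L4 = [True,False,True,False,False,True]"
definition "R4 = [(1,[True,False,False,True,False,True]), (1,[True,False,False,True,False,False]), (1,[False,True,False,True,False,False]), (1,[False,True,False,False,True,False]), (1,[False,False,True,False,True,False]), (1,[False,False,True,False,False,True])]"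
definition "L5 = [True,False,False,True,False,False,True,False,True,False]"
definition "R5 = [(1,[True,False,False,True,False,False,True,False,False,True]), (1,[False,True,False,False,True,False,False,True,False,True]), (-1,[False,False,True,False,False,True,False,False,True,False])]"
definition "L6 = [True,False,False,True,False,False,True,False,False,True,False,False]"
definition "R6 = [(-1,[False,True,False,False,True,False,False,True,False,False,True,False]), (1,[False,False,True,False,False,True,False,False,True,False,False,True])]"
definition "NW = [[], [False], [True], [False,False], [False,True], [True,False], [False,False,True], [False,True,False], [True,False,False], [True,False,True], [False,False,True,False], [False,True,False,False], [False,True,False,True], [True,False,False,True], [True,False,True,False], [False,False,True,False,False], [False,False,True,False,True], [False,True,False,False,True], [False,True,False,True,False], [True,False,False,True,False], [True,False,True,False,False], [False,False,True,False,False,True], [False,False,True,False,True,False], [False,True,False,False,True,False], [False,True,False,True,False,False], [True,False,False,True,False,False], [True,False,False,True,False,True], [False,False,True,False,False,True,False], [False,False,True,False,True,False,False], [False,True,False,False,True,False,False], [False,True,False,False,True,False,True], [True,False,False,True,False,False,True], [True,False,False,True,False,True,False], [False,False,True,False,False,True,False,False], [False,False,True,False,False,True,False,True], [False,True,False,False,True,False,False,True], [False,True,False,False,True,False,True,False], [True,False,False,True,False,False,True,False], [True,False,False,True,False,True,False,False], [False,False,True,False,False,True,False,False,True], [False,False,True,False,False,True,False,True,False], [False,True,False,False,True,False,False,True,False], [False,True,False,False,True,False,True,False,False], [True,False,False,True,False,False,True,False,False], [True,False,False,True,False,False,True,False,True], [False,False,True,False,False,True,False,False,True,False], [False,False,True,False,False,True,False,True,False,False],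 [False,True,False,False,True,False,False,True,False,False], [False,True,False,False,True,False,False,True,False,True], [True,False,False,True,False,False,True,False,False,True], [False,False,True,False,False,True,False,False,True,False,False], [False,False,True,False,False,True,False,False,True,False,True], [False,True,False,False,True,False,False,True,False,False,True], [True,False,False,True,False,False,True,False,False,True,False], [False,False,True,False,False,True,False,False,True,False,False,True], [False,True,False,False,True,False,False,True,False,False,True,False], [True,False,False,True,False,False,True,False,False,True,False,True], [False,False,True,False,False,True,False,False,True,False,False,True,False], [False,True,False,False,True,False,False,True,False,False,True,False,True], [False,False,True,False,False,True,False,False,True,False,False,True,False,True]]"

definition "P0 = (1, L0) # R0"
definition "P1 = (1, L1) # R1"
definition "P2 = (1, L2) # R2"
definition "P3 = (1, L3) # R3"
definition "P4 = (1, L4) # R4"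
definition "P5 = (1, L5) # R5"
definition "P6 = (1, L6) # R6"

definition normal :: "bool list \<Rightarrow> bool" where
  "normal w \<longleftrightarrow> \<not> contains L0 w \<and> \<not> contains L1 w \<and> \<not> contains L2 w \<and> \<not> contains L3 w
      \<and> \<not> contains L4 w \<and> \<not> contains L5 w \<and> \<not> contains L6 w"

lemma normal_cons: "normal (x # w) \<Longrightarrow> normal w"
  unfolding normal_def by auto

lemma NW_closed: "\<forall>w\<in>set NW. \<forall>x. normal (x # w) \<longrightarrow> x # w \<in> set NW"
  by (simp add: NW_def normal_def L0_def L1_def L2_def L3_def L4_def L5_def L6_def)

lemma normal_NW: "normal w \<Longrightarrow> w \<in> set NW"
proof (induct w)
  case Nil then show ?case by (simp add: NW_def)
next
  case (Cons x w) then show ?case using NW_closed normal_cons by blast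
qed


lemma zs_map': "x \<in> zspan S \<Longrightarrow> (\<And>x. x \<in> S \<Longrightarrow> f x \<in> zspan T) \<Longrightarrow> f 0 = 0 \<Longrightarrow>
    (\<And>x y. f (x + y) = f x + f y) \<Longrightarrow> (\<And>x. f (- x) = - f x) \<Longrightarrow> f x \<in> zspan T"
  using zs_map by metis

lemmas Ldefs = L0_def R0_def P0_def L1_def R1_def P1_def L2_def R2_def P2_def L3_def R3_def P3_def L4_def R4_def P4_def L5_def R5_def P5_def L6_def R6_def P6_def

locale kl =
  fixes b c s :: "'a::ring_1"
  assumes b3: "b ^ 3 = 0" and c5: "c ^ 5 = 0" and rel: "(b + c - 1) ^ 2 = s"
    and scen: "\<And>y. s * y = y * s" and s3: "s ^ 3 = 0"
begin

definition gen :: "nat \<Rightarrow> 'a set" where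
  "gen d = {s ^ j * evw b c w | j w. j + length w < d}"

definition G :: "nat \<Rightarrow> 'a set" where "G d = zspan (gen d)"

lemma spow_cen: "s ^ j * y = y * s ^ j"
proof (induct j)
  case (Suc j)
  have "s ^ Suc j * y = s * (s ^ j * y)" by (simp add: mult.assoc)
  also have "\<dots> = s * (y * s ^ j)" using Suc by simp
  also have "\<dots> = (s * y) * s ^ j" by (simp add: mult.assoc)
  also have "\<dots> = y * s ^ Suc j" by (simp add: scen mult.assoc power_Suc)
  finally show ?case .
qed simp

lemma gen_mono: "d \<le> d' \<Longrightarrow> gen d \<subseteq> gen d'"
  unfolding gen_def by fastforce

lemma G_mono: "d \<le> d' \<Longrightarrow> G d \<subseteq> G d'"
  unfolding G_def using gen_mono by (meson zs_base zs_subset subset_iff)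

lemma gen_in_G: "j + length w < d \<Longrightarrow> s ^ j * evw b c w \<in> G d"
  unfolding G_def gen_def by (rule zs_base) blast

lemma mulG: assumes "x \<in> G d" shows "evw b c p * x * evw b c q \<in> G (d + length p + length q)"
proof -
  have "x \<in> zspan (gen d)" using assms by (simp add: G_def)
  then show ?thesis unfolding G_def
  proof (rule zs_map'[where f = "\<lambda>x. evw b c p * x * evw b c q"])
    fix y assume "y \<in> gen d"
    then obtain j w where y: "y = s ^ j * evw b c w" "j + length w < d" unfolding gen_def by blast
    have "evw b c p * y * evw b c q = s ^ j * evw b c (p @ w @ q)"
      unfolding y evw_append
      by (simp add: mult.assoc[symmetric]) (simp add: spow_cen mult.assoc)
    moreover have "s ^ j * evw b c (p @ w @ q) \<in> gen (d + length p + length q)"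
      unfolding gen_def using y(2) by (intro CollectI exI[of _ j] exI[of _ "p @ w @ q"]) simp
    ultimately show "evw b c p * y * evw b c q \<in> zspan (gen (d + length p + length q))"
      by (simp add: zs_base)
  qed (simp_all add: algebra_simps)
qed

lemma mulG': "x \<in> G d \<Longrightarrow> d + length p + length q \<le> d' \<Longrightarrow> evw b c p * x * evw b c q \<in> G d'"
  using mulG G_mono by blast

lemma spowG: assumes "x \<in> G d" shows "s ^ i * x \<in> G (d + i)"
proof -
  have "x \<in> zspan (gen d)" using assms by (simp add: G_def)
  then show ?thesis unfolding G_def
  proof (rule zs_map'[where f = "\<lambda>x. s ^ i * x"])
    fix y assume "y \<in> gen d"
    then obtain j w where y: "y = s ^ j * evw b c w" "j + length w < d" unfolding gen_def by blast
    have "s ^ i * y = s ^ (i + j) * evw b c w" unfolding y by (simp add: power_add mult.assoc)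
    moreover have "s ^ (i + j) * evw b c w \<in> gen (d + i)"
      unfolding gen_def using y(2) by (intro CollectI exI[of _ "i + j"] exI[of _ w]) simp
    ultimately show "s ^ i * y \<in> zspan (gen (d + i))"
      by (simp add: zs_base)
  qed (simp_all add: algebra_simps)
qed

lemma G_add: "x \<in> G d \<Longrightarrow> y \<in> G d \<Longrightarrow> x + y \<in> G d" unfolding G_def by (rule zs_add)
lemma G_diff: "x \<in> G d \<Longrightarrow> y \<in> G d \<Longrightarrow> x - y \<in> G d" unfolding G_def by (rule zs_diff)
lemma G_neg: "x \<in> G d \<Longrightarrow> - x \<in> G d" unfolding G_def by (rule zs_neg)
lemma G_zero: "0 \<in> G d" unfolding G_def by (rule zs_zero)

lemma P0_in: "evl b c P0 \<in> G (length L0)"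
proof -
  have "evl b c P0 = b ^ 3" by (simp add: Ldefs power3_eq_cube mult.assoc)
  then show ?thesis using b3 G_zero by simp
qed

lemma P1_in: "evl b c P1 \<in> G (length L1)"
proof -
  have "evl b c P1 = c ^ 5" by (simp add: Ldefs eval_nat_numeral mult.assoc)
  then show ?thesis using c5 G_zero by simp
qed

lemma P2_in: "evl b c P2 \<in> G (length L2)"
proof -
  have "evl b c P2 = (b + c - 1) ^ 2 + b + b + c + c - 1"
    by (simp add: Ldefs power2_eq_square algebra_simps)
  also have "\<dots> = s ^ 1 * evw b c [] + s ^ 0 * evw b c [False] + s ^ 0 * evw b c [False]
     + s ^ 0 * evw b c [True] + s ^ 0 * evw b c [True] - s ^ 0 * evw b c []"
    using rel by simp
  finally show ?thesis by (simp only:) (intro G_add G_diff gen_in_G; simp add: L2_def)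
qed

lemma P3_eq: "evl b c P3 = (evw b c [] * evl b c (P1) * evw b c []) - (evw b c [] * evl b c (P2) * evw b c [True,True,True]) + (evw b c [True,False] * evl b c (P2) * evw b c [True]) - (evw b c [True,False,False] * evl b c (P2) * evw b c []) + (evw b c [True] * evl b c (P0) * evw b c [False]) + (evw b c [False] * evl b c (P2) * evw b c [True,True]) - (evw b c [False,True,False] * evl b c (P2) * evw b c []) + (evw b c [False,True] * evl b c (P0) * evw b c []) - (evw b c [] * evl b c (P0) * evw b c [True,True])"
  by (simp add: Ldefs algebra_simps)

lemma P3_in: "evl b c P3 \<in> G (length L3)"
  unfolding P3_eq
  by (intro G_add G_diff G_neg; rule mulG'[OF P0_in] mulG'[OF P1_in] mulG'[OF P2_in]; simp add: Ldefs)

lemma P4_eq: "evl b c P4 = - (evw b c [] * evl b c (P1) * evw b c [True]) + (evw b c [True,True,True,True] * evl b c (P2) * evw b c []) - (evw b c [] * evl b c (P1) * evw b c [False]) - (evw b c [] * evl b c (P2) * evw b c [True,True,False,True]) - (evw b c [] * evl b c (P2) * evw b c [True,True,False,False]) + (evw b c [True,False] * evl b c (P2) * evw b c [False,True]) + (evw b c [True,False] * evl b c (P2) * evw b c [False,False]) - (evw b c [True,False,True] * evl b c (P0) * evw b c []) - (evw b c [True] * evl b c (P0) * evw b c [False,True]) - (evw b c [True] * evl b c (P0) * evw b c [False,False]) + (evw b c [False] * evl b c (P2) * evw b c [True,False,True]) + (evw b c [False] * evl b c (P2) * evw b c [True,False,False]) - (evw b c [False] * evl b c (P3) * evw b c [])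 - (evw b c [] * evl b c (P0) * evw b c [True,False,True]) - (evw b c [] * evl b c (P0) * evw b c [True,False,False])"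
  by (simp add: Ldefs algebra_simps)

lemma P4_in: "evl b c P4 \<in> G (length L4)"
  unfolding P4_eq
  by (intro G_add G_diff G_neg; rule mulG'[OF P0_in] mulG'[OF P1_in] mulG'[OF P2_in] mulG'[OF P3_in]; simp add: Ldefs)

lemma P5_eq: "evl b c P5 = - (evw b c [] * evl b c (P1) * evw b c [False,True,False,False,True]) + (evw b c [True,True,True,True] * evl b c (P4) * evw b c []) - (evw b c [] * evl b c (P1) * evw b c [False,False,True,False,True]) - (evw b c [] * evl b c (P1) * evw b c [False,False,True,False,False]) - (evw b c [] * evl b c (P2) * evw b c [True,True,False,True,False,True,False,False]) - (evw b c [] * evl b c (P2) * evw b c [True,True,False,True,False,False,True,False]) - (evw b c [] * evl b c (P2) * evw b c [True,True,False,False,True,False,True,False]) - (evw b c [] * evl b c (P2) * evw b c [True,True,False,False,True,False,False,True]) + (evw b c [True,False] * evl b c (P2) * evw b c [False,True,False,True,False,False]) + (evw b c [True,False] * evl b c (P2) * evw b c [False,True,False,False,True,False]) + (evw b c [True,False] * evl b c (P2) * evw b c [False,False,True,False,True,False]) + (evw b c [True,False] * evl b c (P2) * evw b c [False,False,True,False,False,True]) - (evw b c [] * evl b c (P4) * evw b c [False,True,False,False]) - (evw b c [] * evl b c (P4) * evw b c [False,False,True,False]) - (evw b c [True,False,True] * evl b c (P0) * evw b c [True,False,True,False]) - (evw b c [True,False,True] * evl b c (P0) * evw b c [True,False,False,True]) + (evw b c [True,False,False,True] * evl b c (P0) * evw b c [True,False,False]) + (evw b c [True,False,False,True] * evl b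 c (P0) * evw b c [False,True,False]) - (evw b c [True] * evl b c (P0) * evw b c [False,True,False,True,False,False]) - (evw b c [True] * evl b c (P0) * evw b c [False,True,False,False,True,False]) - (evw b c [True] * evl b c (P0) * evw b c [False,False,True,False,True,False]) - (evw b c [True] * evl b c (P0) * evw b c [False,False,True,False,False,True]) + (evw b c [False] * evl b c (P2) * evw b c [True,False,True,False,True,False,False]) + (evw b c [False] * evl b c (P2) * evw b c [True,False,True,False,False,True,False]) + (evw b c [False] * evl b c (P2) * evw b c [True,False,False,True,False,True,False]) + (evw b c [False] * evl b c (P2) * evw b c [True,False,False,True,False,False,True]) - (evw b c [False] * evl b c (P3) * evw b c [False,True,False,False]) - (evw b c [False] * evl b c (P3) * evw b c [False,False,True,False]) - (evw b c [False] * evl b c (P4) * evw b c [False,True,False]) - (evw b c [False] * evl b c (P4) * evw b c [False,False,True]) + (evw b c [False,True,False,True] * evl b c (P0) * evw b c [True,False,False]) + (evw b c [False,True,False,True] * evl b c (P0) * evw b c [False,True,False]) + (evw b c [False,True,False,False] * evl b c (P3) * evw b c [False]) + (evw b c [False,True,False,False] * evl b c (P4) * evw b c []) + (evw b c [False,True,False,False,True] * evl b c (P0) * evw b c [True,False]) + (evw b c [False,True,False,False,True] * evl b c (P0) * evw b c [False,True]) - (evw b c [False,True] * evl b c (P0) * evw b c [False,True,False,True,False]) - (evw b c [False,True] * evl b c (P0) * evw b c [False,True,False,False,True]) + (evw b c [False,False,True,False,True] * evl b c (P0) * evw b c [True,False]) + (evw b c [False,False,True,False,True] * evl b c (P0)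 * evw b c [False,True]) + (evw b c [False,False,True,False,False,True] * evl b c (P0) * evw b c [True]) - (evw b c [] * evl b c (P0) * evw b c [True,False,True,False,True,False,False]) + (evw b c [] * evl b c (P0) * evw b c [True,False,True,False,False,False,True])"
  by (simp add: Ldefs algebra_simps)

lemma P5_in: "evl b c P5 \<in> G (length L5)"
  unfolding P5_eq
  by (intro G_add G_diff G_neg; rule mulG'[OF P0_in] mulG'[OF P1_in] mulG'[OF P2_in] mulG'[OF P3_in] mulG'[OF P4_in]; simp add: Ldefs)

lemma P6_eq: "evl b c P6 = (evw b c [] * evl b c (P5) * evw b c [False,False]) - (evw b c [True,False,False,True,False,False,True,False,True] * evl b c (P0) * evw b c []) - (evw b c [False] * evl b c (P5) * evw b c [False]) + (evw b c [False,False] * evl b c (P5) * evw b c []) + (evw b c [False,False,True,False,False,True,False,False,True] * evl b c (P0) * evw b c []) - (evw b c [] * evl b c (P0) * evw b c [True,False,False,True,False,False,True,False,True]) - (evw b c [] * evl b c (P0) * evw b c [True,False,False,True,False,False,True,False,False]) + (evw b c [] * evl b c (P0) * evw b c [False,True,False,False,True,False,False,True,False])"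
  by (simp add: Ldefs algebra_simps)

lemma P6_in: "evl b c P6 \<in> G (length L6)"
  unfolding P6_eq
  by (intro G_add G_diff G_neg; rule mulG'[OF P0_in] mulG'[OF P1_in] mulG'[OF P2_in] mulG'[OF P3_in] mulG'[OF P4_in] mulG'[OF P5_in]; simp add: Ldefs)

definition Wset :: "'a set" where
  "Wset = {s ^ j * evw b c w | j w. j < 3 \<and> normal w}"

lemma R_sum: assumes "\<forall>(a,u)\<in>set R. s ^ j * evw b c (p @ u @ q) \<in> zspan Wset"
  shows "s ^ j * (evw b c p * evl b c R * evw b c q) \<in> zspan Wset"
  using assms
proof (induct R)
  case Nil then show ?case by (simp add: zs_zero)
next
  case (Cons au R)
  obtain a u where au: "au = (a, u)" by (cases au)
  have e: "s ^ j * (evw b c p * evl b c (au # R) * evw b c q)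
     = of_int a * (s ^ j * evw b c (p @ u @ q)) + s ^ j * (evw b c p * evl b c R * evw b c q)"
  proof -
    have "s ^ j * (evw b c p * evl b c (au # R) * evw b c q)
       = s ^ j * (evw b c p * of_int a * evw b c u * evw b c q) + s ^ j * (evw b c p * evl b c R * evw b c q)"
      by (simp add: au distrib_left distrib_right mult.assoc)
    also have "evw b c p * of_int a = of_int a * evw b c p" by (rule mult_of_int_commute[symmetric])
    also have "s ^ j * (of_int a * evw b c p * evw b c u * evw b c q) = (s ^ j * of_int a) * evw b c (p @ u @ q)"
      by (simp add: evw_append mult.assoc)
    also have "s ^ j * of_int a = of_int a * s ^ j" by (rule mult_of_int_commute[symmetric])
    finally show ?thesis by (simp add: mult.assoc)
  qed
  show ?case unfolding e using Cons by (auto simp: au intro!: zs_add zs_of_int)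
qed

lemma G_sub: assumes "\<And>j' w'. j' + length w' < d \<Longrightarrow> s ^ j' * evw b c w' \<in> zspan Wset"
  shows "G d \<subseteq> zspan Wset"
  unfolding G_def by (rule zs_subset) (use assms in \<open>auto simp: gen_def\<close>)

lemma reduce_step:
  assumes Pin: "evw b c L + evl b c R \<in> G (length L)"
    and Rprop: "\<forall>(a,u)\<in>set R. length u = length L \<and> num u < num L"
    and w: "w = p @ L @ q"
    and IHout: "G (length w + j) \<subseteq> zspan Wset"
    and IHin: "\<And>u. length u = length w \<Longrightarrow> num u < num w \<Longrightarrow> s ^ j * evw b c u \<in> zspan Wset"
  shows "s ^ j * evw b c w \<in> zspan Wset"
proof -
  have "s ^ j * evw b c w = s ^ j * (evw b c p * (evw b c L + evl b c R) * evw b c q)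
      - s ^ j * (evw b c p * evl b c R * evw b c q)"
    unfolding w by (simp add: evw_append algebra_simps)
  moreover have "s ^ j * (evw b c p * (evw b c L + evl b c R) * evw b c q) \<in> zspan Wset"
  proof -
    have "evw b c p * (evw b c L + evl b c R) * evw b c q \<in> G (length w)"
      using mulG[OF Pin, of p q] w by (simp add: add.commute add.left_commute)
    then have "s ^ j * (evw b c p * (evw b c L + evl b c R) * evw b c q) \<in> G (length w + j)"
      by (rule spowG)
    then show ?thesis using IHout by blast
  qed
  moreover have "s ^ j * (evw b c p * evl b c R * evw b c q) \<in> zspan Wset"
  proof (rule R_sum, safe)
    fix a u assume "(a, u) \<in> set R"
    then have "length u = length L" "num u < num L" using Rprop by auto
    then show "s ^ j * evw b c (p @ u @ q) \<in> zspan Wset"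
      using IHin num_less w by auto
  qed
  ultimately show ?thesis by (simp add: zs_diff)
qed

lemma Pdata:
  "\<forall>(a,u)\<in>set R0. length u = length L0 \<and> num u < num L0"
  "\<forall>(a,u)\<in>set R1. length u = length L1 \<and> num u < num L1"
  "\<forall>(a,u)\<in>set R2. length u = length L2 \<and> num u < num L2"
  "\<forall>(a,u)\<in>set R3. length u = length L3 \<and> num u < num L3"
  "\<forall>(a,u)\<in>set R4. length u = length L4 \<and> num u < num L4"
  "\<forall>(a,u)\<in>set R5. length u = length L5 \<and> num u < num L5"
  "\<forall>(a,u)\<in>set R6. length u = length L6 \<and> num u < num L6"
  by (simp_all add: Ldefs)

lemma Pin':
  "evw b c L0 + evl b c R0 \<in> G (length L0)" "evw b c L1 + evl b c R1 \<in> G (length L1)"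
  "evw b c L2 + evl b c R2 \<in> G (length L2)" "evw b c L3 + evl b c R3 \<in> G (length L3)"
  "evw b c L4 + evl b c R4 \<in> G (length L4)" "evw b c L5 + evl b c R5 \<in> G (length L5)"
  "evw b c L6 + evl b c R6 \<in> G (length L6)"
  using P0_in P1_in P2_in P3_in P4_in P5_in P6_in by (simp_all add: P0_def P1_def P2_def P3_def P4_def P5_def P6_def)

lemma all_in_aux:
  assumes outer: "\<And>j' w'. j' + length w' < d \<Longrightarrow> s ^ j' * evw b c w' \<in> zspan Wset"
  shows "\<forall>j w. j + length w = d \<longrightarrow> num w < N \<longrightarrow> s ^ j * evw b c w \<in> zspan Wset"
proof (induct N)
  case 0 then show ?case by simp
next
  case (Suc N)
  show ?case
  proof (intro allI impI)
    fix j w assume d: "j + length w = d" and N: "num w < Suc N"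
    have IHin: "s ^ j * evw b c u \<in> zspan Wset" if "length u = length w" "num u < num w" for u
      using Suc[rule_format, of j u] that d N by simp
    have IHout: "G (length w + j) \<subseteq> zspan Wset" using G_sub[OF outer] d by (simp add: add.commute)
    show "s ^ j * evw b c w \<in> zspan Wset"
    proof (cases "j < 3")
      case False
      then have "s ^ j = 0" using s3 by (metis le_add_diff_inverse not_less power_add mult_zero_left)
      then show ?thesis by (simp add: zs_zero)
    next
      case True
      show ?thesis
      proof (cases "normal w")
        case True
        then show ?thesis using \<open>j < 3\<close> by (intro zs_base) (auto simp: Wset_def)
      next
        case False
        then consider "contains L0 w" | "contains L1 w" | "contains L2 w" | "contains L3 w"
          | "contains L4 w" | "contains L5 w" | "contains L6 w" unfolding normal_def by blast
        then show ?thesis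
        proof cases
          case 1 then obtain p q where "w = p @ L0 @ q" by (auto simp: contains_iff)
          then show ?thesis by (rule reduce_step[OF Pin'(1) Pdata(1) _ IHout IHin])
        next
          case 2 then obtain p q where "w = p @ L1 @ q" by (auto simp: contains_iff)
          then show ?thesis by (rule reduce_step[OF Pin'(2) Pdata(2) _ IHout IHin])
        next
          case 3 then obtain p q where "w = p @ L2 @ q" by (auto simp: contains_iff)
          then show ?thesis by (rule reduce_step[OF Pin'(3) Pdata(3) _ IHout IHin])
        next
          case 4 then obtain p q where "w = p @ L3 @ q" by (auto simp: contains_iff)
          then show ?thesis by (rule reduce_step[OF Pin'(4) Pdata(4) _ IHout IHin])
        next
          case 5 then obtain p q where "w = p @ L4 @ q" by (auto simp: contains_iff)
          then show ?thesis by (rule reduce_step[OF Pin'(5) Pdata(5) _ IHout IHin])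
        next
          case 6 then obtain p q where "w = p @ L5 @ q" by (auto simp: contains_iff)
          then show ?thesis by (rule reduce_step[OF Pin'(6) Pdata(6) _ IHout IHin])
        next
          case 7 then obtain p q where "w = p @ L6 @ q" by (auto simp: contains_iff)
          then show ?thesis by (rule reduce_step[OF Pin'(7) Pdata(7) _ IHout IHin])
        qed
      qed
    qed
  qed
qed

lemma all_in: "s ^ j * evw b c w \<in> zspan Wset"
proof -
  have "\<forall>j w. j + length w = d \<longrightarrow> s ^ j * evw b c w \<in> zspan Wset" for d
  proof (induct d rule: less_induct)
    case (less d)
    have outer: "s ^ j' * evw b c w' \<in> zspan Wset" if "j' + length w' < d" for j' w'
      using less[rule_format, OF that refl] .
    show ?case
    proof (intro allI impI)
      fix j and w :: "bool list" assume "j + length w = d"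
      then show "s ^ j * evw b c w \<in> zspan Wset"
        using all_in_aux[where d=d and N="Suc (num w)", OF outer] by blast
    qed
  qed
  then show ?thesis by blast
qed

end


lemma (in kl) key_False:
  assumes QA: "QA TYPE('a)" and one: "(1::'a) \<noteq> 0"
  shows False
proof -
  interpret V: vector_space "\<lambda>q (x::'a). iota q * x" by (rule iota_vs[OF QA])
  have finW: "finite Wset"
  proof (rule finite_subset)
    show "Wset \<subseteq> (\<lambda>(j,w). s ^ j * evw b c w) ` ({..<3::nat} \<times> set NW)"
      using normal_NW by (fastforce simp: Wset_def)
  qed simp
  have zsp: "x \<in> V.span Wset" if "x \<in> zspan Wset" for x
    using that by (induct rule: zspan.induct) (auto intro: V.span_zero V.span_base V.span_add V.span_neg)
  have lm: "y * v \<in> V.span Wset"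
    if base: "\<And>x. x \<in> Wset \<Longrightarrow> y * x \<in> V.span Wset" and v: "v \<in> V.span Wset" for y v
  proof -
    have P: "V.subspace {x. y * x \<in> V.span Wset}"
    proof (rule V.subspaceI)
      show "0 \<in> {x. y * x \<in> V.span Wset}" by (simp add: V.span_zero)
    next
      fix x z assume "x \<in> {x. y * x \<in> V.span Wset}" "z \<in> {x. y * x \<in> V.span Wset}"
      then show "x + z \<in> {x. y * x \<in> V.span Wset}" by (simp add: distrib_left V.span_add)
    next
      fix q x assume x: "x \<in> {x. y * x \<in> V.span Wset}"
      have "y * (iota q * x) = (y * iota q) * x" by (simp only: mult.assoc)
      also have "y * iota q = iota q * y" by (rule iota_central[OF QA, symmetric])
      finally have "y * (iota q * x) = iota q * (y * x)" by (simp only: mult.assoc)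
      then show "iota q * x \<in> {x. y * x \<in> V.span Wset}" using x by (simp add: V.span_scale)
    qed
    show ?thesis
      by (rule V.span_induct[OF v, where P="\<lambda>x. y * x \<in> V.span Wset"]) (use P base in auto)
  qed
  have bW: "b * x \<in> V.span Wset" if xW: "x \<in> Wset" for x
  proof -
    obtain j w where x: "x = s ^ j * evw b c w" using xW unfolding Wset_def by blast
    have "b * x = (b * s ^ j) * evw b c w" by (simp add: x mult.assoc)
    also have "b * s ^ j = s ^ j * b" by (rule spow_cen[symmetric])
    also have "s ^ j * b * evw b c w = s ^ j * evw b c (False # w)" by (simp add: mult.assoc)
    finally have e: "b * x = s ^ j * evw b c (False # w)" .
    show ?thesis unfolding e by (rule zsp[OF all_in])
  qed
  have cW: "c * x \<in> V.span Wset" if xW: "x \<in> Wset" for x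
  proof -
    obtain j w where x: "x = s ^ j * evw b c w" using xW unfolding Wset_def by blast
    have "c * x = (c * s ^ j) * evw b c w" by (simp add: x mult.assoc)
    also have "c * s ^ j = s ^ j * c" by (rule spow_cen[symmetric])
    also have "s ^ j * c * evw b c w = s ^ j * evw b c (True # w)" by (simp add: mult.assoc)
    finally have e: "c * x = s ^ j * evw b c (True # w)" .
    show ?thesis unfolding e by (rule zsp[OF all_in])
  qed
  have st: "y * v \<in> V.span Wset" if y: "y \<in> {b, c, 1 - b - c}" and v: "v \<in> V.span Wset" for y v
  proof -
    have bv: "b * v \<in> V.span Wset" by (rule lm[OF bW v])
    have cv: "c * v \<in> V.span Wset" by (rule lm[OF cW v])
    have "(1 - b - c) * v = v - b * v - c * v" by (simp add: algebra_simps)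
    then have "(1 - b - c) * v \<in> V.span Wset" using bv cv v by (simp add: V.span_diff)
    then show ?thesis using y bv cv by auto
  qed
  have normal_nil: "normal []" by (simp add: normal_def Ldefs)
  have one_in: "1 \<in> V.span Wset"
  proof -
    have "s ^ 0 * evw b c [] \<in> Wset" unfolding Wset_def
      by (rule CollectI, intro exI[of _ 0] exI[of _ "[]"]) (simp add: normal_nil)
    then show ?thesis by (simp add: V.span_base)
  qed
  have n3: "(1 - b - c) ^ 6 = 0"
  proof -
    have "(1 - b - c) ^ 6 = ((1 - b - c) ^ 2) ^ 3"
      by (simp add: power_mult[symmetric])
    also have "(1 - b - c) ^ 2 = (b + c - 1) ^ 2"
      by (simp add: power2_eq_square algebra_simps)
    also have "((b + c - 1) ^ 2) ^ 3 = 0" using rel s3 by (simp only:)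
    finally show ?thesis .
  qed
  have sum: "b + c + (1 - b - c) = 1"
  proof -
    have "1 - b - c = 1 - (b + c)" by (simp only: diff_diff_eq)
    then have "b + c + (1 - b - c) = (1 - (b + c)) + (b + c)" by (simp only: add.commute)
    then show ?thesis by (simp only: diff_add_cancel)
  qed
  show False
    by (rule fd_contra[OF QA one finW one_in st b3 c5 n3 sum])
qed

lemma comm_nil:
  fixes x y :: "'a::ring_1"
  assumes xy: "x * y = y * x" and x: "x ^ i = 0" and y: "y ^ j = 0"
  shows "(x + y) ^ (i + j) = 0"
proof -
  have "(x + y) ^ n \<in> zspan {x ^ a * y ^ b | a b. a + b = n}" for n
  proof (induct n)
    case 0 then show ?case by (intro zs_base) auto
  next
    case (Suc n)
    have "(x + y) ^ n * (x + y) \<in> zspan {x ^ a * y ^ b | a b. a + b = Suc n}"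
    proof (rule zs_map'[where f = "\<lambda>z. z * (x + y)", OF Suc])
      fix z assume "z \<in> {x ^ a * y ^ b | a b. a + b = n}"
      then obtain a b where z: "z = x ^ a * y ^ b" "a + b = n" by blast
      have "y ^ b * x = x * y ^ b" using power_commuting_commutes[OF xy[symmetric]] by simp
      then have e: "z * (x + y) = x ^ Suc a * y ^ b + x ^ a * y ^ Suc b"
        unfolding z by (simp add: distrib_left mult.assoc power_commutes)
          (simp add: mult.assoc[symmetric] power_commutes)
      have m1: "x ^ Suc a * y ^ b \<in> {x ^ a * y ^ b | a b. a + b = Suc n}"
        by (rule CollectI, intro exI[of _ "Suc a"] exI[of _ b]) (use z(2) in simp)
      have m2: "x ^ a * y ^ Suc b \<in> {x ^ a * y ^ b | a b. a + b = Suc n}"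
        by (rule CollectI, intro exI[of _ a] exI[of _ "Suc b"]) (use z(2) in simp)
      show "z * (x + y) \<in> zspan {x ^ a * y ^ b | a b. a + b = Suc n}"
        unfolding e by (rule zs_add[OF zs_base[OF m1] zs_base[OF m2]])
    qed (simp_all add: algebra_simps)
    then show ?case by (simp only: power_Suc2)
  qed
  moreover have "z = 0" if "z \<in> zspan {x ^ a * y ^ b | a b. a + b = i + j}" for z
    using that
  proof (induct rule: zspan.induct)
    case (zs_base z)
    then obtain a b where z: "z = x ^ a * y ^ b" "a + b = i + j" by blast
    then have "i \<le> a \<or> j \<le> b" by linarith
    then show ?case
    proof
      assume "i \<le> a" then have "x ^ a = 0" using x by (metis le_add_diff_inverse power_add mult_zero_left)
      then show ?thesis using z by simp
    next
      assume "j \<le> b" then have "y ^ b = 0" using y by (metis le_add_diff_inverse power_add mult_zero_left)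
      then show ?thesis using z by simp
    qed
  qed auto
  ultimately show ?thesis by blast
qed


theorem proposition2p4:
  fixes p q :: nat
  assumes "CHAR('a::ring_1) = 0"
    and "1 \<le> p" and "p \<le> 3" and "1 \<le> q" and "q \<le> 5"
    and "two_nil_sum p q TYPE('a)"
  shows "\<forall>x y :: 'a. x * y = y * x"
proof -
  note ch = assms(1)
  have one: "(1::'a) \<noteq> 0"
  proof
    assume "(1::'a) = 0"
    then have "of_nat 1 = (0::'a)" by simp
    then have "CHAR('a) dvd 1" by (simp only: of_nat_eq_0_iff_char_dvd)
    then show False using ch by simp
  qed
  have dec: "\<exists>b c. a = b + c \<and> b ^ 3 = 0 \<and> c ^ 5 = 0" if na: "\<not> central_unit a" for a :: 'a
  proof -
    obtain b c where bc: "a = b + c" "b ^ p = 0" "c ^ q = 0"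
      using assms(6) na unfolding two_nil_sum_def by blast
    have "b ^ 3 = b ^ p * b ^ (3 - p)" using assms(3) by (simp add: power_add[symmetric])
    then have b3: "b ^ 3 = 0" using bc(2) by simp
    have "c ^ 5 = c ^ q * c ^ (5 - q)" using assms(5) by (simp add: power_add[symmetric])
    then have c5: "c ^ 5 = 0" using bc(3) by simp
    show ?thesis using bc(1) b3 c5 by blast
  qed
  have QA: "QA TYPE('a)"
    unfolding QA_def
  proof (intro allI impI)
    fix n :: int assume n: "n \<noteq> 0"
    show "ring_unit (of_int n :: 'a)"
    proof (rule ccontr)
      assume nu: "\<not> ring_unit (of_int n :: 'a)"
      then have "\<not> central_unit (of_int n :: 'a)" by (simp add: central_unit_def)
      then obtain b c :: 'a where bc: "of_int n = b + c" "b ^ 3 = 0" "c ^ 5 = 0" using dec by blast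
      have ceq: "c = of_int n - b" using bc(1) by simp
      have cb: "b * c = c * b"
        unfolding ceq by (simp add: algebra_simps mult_of_int_commute[of n b])
      have "(b + c) ^ (3 + 5) = 0" by (rule comm_nil[OF cb bc(2) bc(3)])
      then have "(of_int n :: 'a) ^ 8 = 0" using bc(1) by simp
      then have "(of_int (n ^ 8) :: 'a) = 0" by (simp only: of_int_power)
      then have "int CHAR('a) dvd n ^ 8" by (simp only: of_int_eq_0_iff_char_dvd)
      then have "n ^ 8 = 0" using ch by simp
      then show False using n by simp
    qed
  qed
  have cen5: "central n" if n5: "n ^ 5 = 0" for n :: 'a
  proof (rule ccontr)
    assume nc: "\<not> central n"
    have pz: "n ^ k = 0" if "5 \<le> k" for k
    proof -
      have "n ^ k = n ^ 5 * n ^ (k - 5)" using that by (simp add: power_add[symmetric])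
      then show ?thesis using n5 by simp
    qed
    have cen0: "central (0::'a)" by (simp add: central_def)
    obtain m s :: 'a where mnc: "\<not> central m" and ms: "m ^ 2 = s" and sc: "central s" and s3: "s ^ 3 = 0"
    proof (cases "central (n ^ 4)")
      case False
      have "(n ^ 4) ^ 2 = n ^ 8" by (simp add: power_mult[symmetric])
      then have "(n ^ 4) ^ 2 = 0" using pz[of 8] by simp
      then show ?thesis using that[of "n ^ 4" 0] False cen0 by simp
    next
      case c4: True
      show ?thesis
      proof (cases "central (n ^ 3)")
        case False
        have "(n ^ 3) ^ 2 = n ^ 6" by (simp add: power_mult[symmetric])
        then have "(n ^ 3) ^ 2 = 0" using pz[of 6] by simp
        then show ?thesis using that[of "n ^ 3" 0] False cen0 by simp
      next
        case c3: True
        show ?thesis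
        proof (cases "central (n ^ 2)")
          case False
          have e: "(n ^ 2) ^ 2 = n ^ 4" by (simp add: power_mult[symmetric])
          have "(n ^ 4) ^ 3 = n ^ 12" by (simp add: power_mult[symmetric])
          then have "(n ^ 4) ^ 3 = 0" using pz[of 12] by simp
          then show ?thesis using that[of "n ^ 2" "n ^ 4"] False c4 e by simp
        next
          case True
          have "(n ^ 2) ^ 3 = n ^ 6" by (simp add: power_mult[symmetric])
          then have "(n ^ 2) ^ 3 = 0" using pz[of 6] by simp
          then show ?thesis using that[of n "n ^ 2"] nc True by simp
        qed
      qed
    qed
    have "\<not> central_unit (1 + m)"
    proof
      assume "central_unit (1 + m)"
      then have "\<forall>y. (1 + m) * y = y * (1 + m)" by (simp add: central_unit_def central_def)
      then have "\<forall>y. m * y = y * m" by (simp add: distrib_left distrib_right)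
      then show False using mnc by (simp add: central_def)
    qed
    then obtain b c where bc: "1 + m = b + c" "b ^ 3 = 0" "c ^ 5 = 0" using dec by blast
    have "b + c - 1 = m" using bc(1) by (simp add: algebra_simps)
    then have rel: "(b + c - 1) ^ 2 = s" using ms by simp
    interpret K: kl b c s
      by (unfold_locales) (use bc(2,3) rel sc s3 in \<open>auto simp: central_def\<close>)
    show False by (rule K.key_False[OF QA one])
  qed
  show ?thesis
  proof (intro allI)
    fix x y :: 'a
    show "x * y = y * x"
    proof (cases "central_unit x")
      case True then show ?thesis by (simp add: central_unit_def central_def)
    next
      case False
      then obtain b c where bc: "x = b + c" "b ^ 3 = 0" "c ^ 5 = 0" using dec by blast
      have "b ^ 5 = b ^ 3 * b ^ 2" by (simp add: power_add[symmetric])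
      then have b5: "b ^ 5 = 0" using bc(2) by simp
      have "central b" "central c" using cen5 b5 bc(3) by auto
      then show ?thesis using bc(1) by (simp add: central_def distrib_left distrib_right)
    qed
  qed
qed


end
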